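(* In the Poisson matching problem $PM(\lambda,\mu)$ with $0<\lambda\le\mu$ (defined in the context), the stable matching $\mathcal{M}_s$ is nested.
   Context: Poisson matching problem $PM(\lambda,\mu)$: $\mathcal{B}$ (blue points) and $\mathcal{R}$ (red points) are independent homogeneous Poisson point processes on $\mathbb{R}$ of intensities $\lambda$ and $\mu$ respectively; $\mathcal{S}=\mathcal{B}\cup\mathcal{R}$. A matching is a map $\mathcal{M}:\mathcal{S}\to\mathcal{S}\cup\{\infty\}$ with $\mathcal{M}(r)\in\mathcal{B}\cup\{\infty\}$ for red $r$, $\mathcal{M}(b)\in\mathcal{R}\cup\{\infty\}$ for blue $b$, and $\mathcal{M}(r)=b$ iff $\mathcal{M}(b)=r$. A matching is stable if there is no pair $(b,r)$ with $b\ne\mathcal{M}(r)$ and $|r-b|<\min(|r-\mathcal{M}(r)|,|b-\mathcal{M}(b)|)$. $\mathcal{M}_s$ is the stable matching produced by: every blue point simultaneously emits two rays, one in each direction, each at distance $t$ from its emitter at time $t$; when a ray hits an unmatched red point $r$, the emitter is matched to $r$ and both leave. For $x\in\mathcal{S}$, the matching segment $I_\mathcal{M}(x)$ is the open interval with endpoints $x$ and $\mathcal{M}(x)$ (equal to $(x,\infty)$ if $x$ is unmatched), and $\overline{I}$ denotes closure. A matching $\mathcal{M}$ is nested if for all $x,y\in\mathcal{S}$, $x\in I_\mathcal{M}(y)$ implies $\mathcal{M}(x)\in\overline{I}_\mathcal{M}(y)$. *)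

theory Defs
  imports "HOL-Probability.Probability"
begin

definition pcount :: "real set \<Rightarrow> real \<Rightarrow> real \<Rightarrow> nat" where
  "pcount N a b = card (N \<inter> {a<..b})"

definition poisson_pp :: "'w measure \<Rightarrow> real \<Rightarrow> ('w \<Rightarrow> real set) \<Rightarrow> bool" where
  "poisson_pp P lam N \<longleftrightarrow>
     (\<forall>\<omega>\<in>space P. \<forall>a b. finite (N \<omega> \<inter> {a..b})) \<and>
     (\<forall>a b. (\<lambda>\<omega>. pcount (N \<omega>) a b) \<in> measurable P (count_space UNIV)) \<and>
     (\<forall>a b k. a < b \<longrightarrow>
        measure P {\<omega>\<in>space P. pcount (N \<omega>) a b = k}
          = (lam * (b - a)) ^ k / fact k * exp (- (lam * (b - a))))"

text \<open>Independence
  (of the counts on disjoint intervals within each process, and of the two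
  processes from each other) is expressed through the finite-dimensional
  count vectors: for any pairwise disjoint intervals I_0..I_(n-1) (for B) and
  pairwise disjoint intervals J_0..J_(m-1) (for R), all these counts are
  mutually independent.\<close>

definition disjoint_intervals :: "(nat \<Rightarrow> real \<times> real) \<Rightarrow> nat \<Rightarrow> bool" where
  "disjoint_intervals I n \<longleftrightarrow>
     (\<forall>i<n. \<forall>j<n. i \<noteq> j \<longrightarrow>
        {fst (I i)<..snd (I i)} \<inter> {fst (I j)<..snd (I j)} = {})"

definition poisson_matching_model ::
  "'w measure \<Rightarrow> real \<Rightarrow> real \<Rightarrow> ('w \<Rightarrow> real set) \<Rightarrow> ('w \<Rightarrow> real set) \<Rightarrow> bool" where
  "poisson_matching_model P lam mu B R \<longleftrightarrow>
     prob_space P \<and> poisson_pp P lam B \<and> poisson_pp P mu R \<and>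
     (\<forall>I J n m. disjoint_intervals I n \<longrightarrow> disjoint_intervals J m \<longrightarrow>
        prob_space.indep_vars P (\<lambda>_. count_space UNIV)
          (\<lambda>(c, i) \<omega>. if c then pcount (B \<omega>) (fst (I i)) (snd (I i))
                             else pcount (R \<omega>) (fst (J i)) (snd (J i)))
          (({True} \<times> {..<n}) \<union> ({False} \<times> {..<m})))"

text \<open>A matching of the blue points B and red points R is a map
  M : S -> S + {infinity}, with None standing for infinity
  (i.e. "unmatched").\<close>

definition is_matching :: "real set \<Rightarrow> real set \<Rightarrow> (real \<Rightarrow> real option) \<Rightarrow> bool" where
  "is_matching B R M \<longleftrightarrow>
     (\<forall>r\<in>R. M r = None \<or> (\<exists>b\<in>B. M r = Some b)) \<and>
     (\<forall>b\<in>B. M b = None \<or> (\<exists>r\<in>R. M b = Some r)) \<and>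
     (\<forall>r\<in>R. \<forall>b\<in>B. M r = Some b \<longleftrightarrow> M b = Some r)"

definition partner :: "(real \<Rightarrow> real option) \<Rightarrow> real \<Rightarrow> ereal" where
  "partner M x = (case M x of None \<Rightarrow> PInfty | Some z \<Rightarrow> ereal z)"

text \<open>Time at which x gets matched in the ray process, namely its distance to
  its partner (infinity if never matched).\<close>
definition match_time :: "(real \<Rightarrow> real option) \<Rightarrow> real \<Rightarrow> ereal" where
  "match_time M x = (case M x of None \<Rightarrow> PInfty | Some z \<Rightarrow> ereal \<bar>x - z\<bar>)"

text \<open>M is the outcome of the ray process: every blue point b emits rays in
  both directions, at time t each ray is at distance t from b.  A matched
  pair (b,r) is matched at time |b - r|, so x is unmatched during the whole
  time interval before match_time M x.  The rule of the process: whenever a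
  ray of b hits a red point r (at time |b - r|) while both b and r are still
  unmatched, b is matched to r.\<close>
definition ray_matching :: "real set \<Rightarrow> real set \<Rightarrow> (real \<Rightarrow> real option) \<Rightarrow> bool" where
  "ray_matching B R M \<longleftrightarrow>
     is_matching B R M \<and>
     (\<forall>b\<in>B. \<forall>r\<in>R.
        ereal \<bar>b - r\<bar> \<le> match_time M b \<and> ereal \<bar>b - r\<bar> \<le> match_time M r
        \<longrightarrow> M b = Some r)"

definition match_seg :: "(real \<Rightarrow> real option) \<Rightarrow> real \<Rightarrow> ereal set" where
  "match_seg M x = {min (ereal x) (partner M x) <..< max (ereal x) (partner M x)}"

definition nested :: "real set \<Rightarrow> (real \<Rightarrow> real option) \<Rightarrow> bool" where
  "nested S M \<longleftrightarrow>
     (\<forall>x\<in>S. \<forall>y\<in>S. ereal x \<in> match_seg M y \<longrightarrow> partner M x \<in> closure (match_seg M y))"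

end

theory Submission
  imports Defs
begin

lemma mt_some: "M x = Some q \<Longrightarrow> match_time M x = ereal \<bar>x - q\<bar>"
  by (simp add: match_time_def)

lemma mt_none: "M x = None \<Longrightarrow> match_time M x = PInfty"
  by (simp add: match_time_def)

lemma ray_rule:
  assumes "ray_matching B R M" "b \<in> B" "r \<in> R"
    "ereal \<bar>b - r\<bar> \<le> match_time M b" "ereal \<bar>b - r\<bar> \<le> match_time M r"
  shows "M b = Some r"
  using assms unfolding ray_matching_def by blast

lemma inner:
  assumes rm: "ray_matching B R M" and b0: "b0 \<in> B" and r0: "r0 \<in> R"
    and mb: "M b0 = Some r0" and mr: "M r0 = Some b0" and x: "x \<in> B \<union> R"
    and lo: "min b0 r0 < x" and hi: "x < max b0 r0"
  shows "\<exists>q. M x = Some q \<and> min b0 r0 \<le> q \<and> q \<le> max b0 r0"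
proof -
  have im: "is_matching B R M" using rm unfolding ray_matching_def by blast
  have tb0: "match_time M b0 = ereal \<bar>b0 - r0\<bar>" using mt_some[of M b0 r0, OF mb] .
  have tr0: "match_time M r0 = ereal \<bar>b0 - r0\<bar>" using mt_some[of M r0 b0, OF mr] by (simp add: abs_minus_commute)
  show ?thesis
  proof (cases "x \<in> B")
    case True
    show ?thesis
    proof (cases "ereal \<bar>x - r0\<bar> \<le> match_time M x")
      case True
      have "M x = Some r0"
        using ray_rule[OF rm \<open>x \<in> B\<close> r0 True] tr0 lo hi by auto
      then show ?thesis by auto
    next
      case False
      then obtain q where q: "M x = Some q"
        by (cases "M x") (auto simp: match_time_def)
      have tx: "\<bar>x - q\<bar> < \<bar>x - r0\<bar>" using False mt_some[of M x q, OF q] by auto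
      have qR: "q \<in> R" and mq: "M q = Some x"
        using im \<open>x \<in> B\<close> q unfolding is_matching_def by force+
      show ?thesis
      proof (rule ccontr)
        assume "\<not> ?thesis"
        then have out: "q < min b0 r0 \<or> q > max b0 r0" using q by auto
        have a1: "\<bar>b0 - q\<bar> < \<bar>x - q\<bar>" and a2: "\<bar>b0 - q\<bar> < \<bar>b0 - r0\<bar>"
          using out tx lo hi by (smt (verit))+
        have "M b0 = Some q"
          using ray_rule[OF rm b0 qR] tb0 mt_some[of M q x, OF mq] a1 a2
          by (auto simp: abs_minus_commute)
        then have "q = r0" using mb by simp
        then show False using out by auto
      qed
    qed
  next
    case False
    then have xR: "x \<in> R" using x by auto
    show ?thesis
    proof (cases "ereal \<bar>b0 - x\<bar> \<le> match_time M x")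
      case True
      have "M b0 = Some x"
        using ray_rule[OF rm b0 xR _ True] tb0 lo hi by auto
      then show ?thesis using mb lo hi by auto
    next
      case False
      then obtain q where q: "M x = Some q"
        by (cases "M x") (auto simp: match_time_def)
      have tx: "\<bar>x - q\<bar> < \<bar>x - b0\<bar>" using False mt_some[of M x q, OF q] by (auto simp: abs_minus_commute)
      have qB: "q \<in> B" and mq: "M q = Some x"
        using im xR q unfolding is_matching_def by force+
      show ?thesis
      proof (rule ccontr)
        assume "\<not> ?thesis"
        then have out: "q < min b0 r0 \<or> q > max b0 r0" using q by auto
        have a1: "\<bar>q - r0\<bar> < \<bar>x - q\<bar>" and a2: "\<bar>q - r0\<bar> < \<bar>b0 - r0\<bar>"
          using out tx lo hi by (smt (verit))+
        have "M q = Some r0"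
          using ray_rule[OF rm qB r0] tr0 mt_some[of M q x, OF mq] a1 a2
          by (auto simp: abs_minus_commute)
        then have "x = r0" using mq by simp
        then show False using lo hi by auto
      qed
    qed
  qed
qed

lemma outer:
  assumes rm: "ray_matching B R M" and y: "y \<in> B \<union> R" and my: "M y = None"
    and x: "x \<in> B \<union> R" and yx: "y < x" and q: "M x = Some q"
  shows "y \<le> q"
proof (rule ccontr)
  assume "\<not> y \<le> q"
  then have qy: "q < y" by simp
  have im: "is_matching B R M" using rm unfolding ray_matching_def by blast
  have ty: "match_time M y = PInfty" using mt_none[of M y, OF my] .
  have tx: "match_time M x = ereal \<bar>x - q\<bar>" using mt_some[of M x q, OF q] .
  show False
  proof (cases "x \<in> B")
    case True
    have qR: "q \<in> R" and mq: "M q = Some x"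
      using im True q unfolding is_matching_def by force+
    show False
    proof (cases "y \<in> B")
      case True
      have "M y = Some q" using ray_rule[OF rm True qR] ty mt_some[of M q x, OF mq] qy yx by auto
      then show False using my by simp
    next
      case False
      then have "y \<in> R" using y by auto
      have "M x = Some y" using ray_rule[OF rm \<open>x \<in> B\<close> \<open>y \<in> R\<close>] ty tx qy yx by auto
      then show False using q qy by simp
    qed
  next
    case False
    then have xR: "x \<in> R" using x by auto
    have qB: "q \<in> B" and mq: "M q = Some x"
      using im xR q unfolding is_matching_def by force+
    show False
    proof (cases "y \<in> R")
      case True
      have "M q = Some y" using ray_rule[OF rm qB True] ty mt_some[of M q x, OF mq] qy yx by auto
      then show False using mq yx by simp
    next
      case False
      then have "y \<in> B" using y by auto
      have "M y = Some x" using ray_rule[OF rm \<open>y \<in> B\<close> xR] ty tx qy yx by auto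
      then show False using my by simp
    qed
  qed
qed

lemma det_nested:
  assumes rm: "ray_matching B R M"
  shows "nested (B \<union> R) M"
  unfolding nested_def
proof (intro ballI impI)
  fix x y assume x: "x \<in> B \<union> R" and y: "y \<in> B \<union> R" and xs: "ereal x \<in> match_seg M y"
  have im: "is_matching B R M" using rm unfolding ray_matching_def by blast
  show "partner M x \<in> closure (match_seg M y)"
  proof (cases "M y")
    case None
    have seg: "match_seg M y = {ereal y <..< PInfty}"
      using None by (simp add: match_seg_def partner_def)
    have yx: "y < x" using xs unfolding seg by simp
    have cl: "closure (match_seg M y) = {ereal y .. PInfty}"
      unfolding seg by (rule closure_greaterThanLessThan) simp
    show ?thesis
    proof (cases "M x")
      case None then show ?thesis by (simp add: cl partner_def)
    next
      case (Some q)
      have "y \<le> q" using outer[OF rm y None x yx Some] .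
      then show ?thesis by (simp add: cl partner_def Some)
    qed
  next
    case (Some p)
    have e1: "min (ereal y) (ereal p) = ereal (min y p)" by (simp add: min_def)
    have e2: "max (ereal y) (ereal p) = ereal (max y p)" by (simp add: max_def)
    have seg: "match_seg M y = {ereal (min y p) <..< ereal (max y p)}"
      unfolding match_seg_def partner_def Some option.case e1[symmetric] e2[symmetric] by (rule refl)
    have lo0: "min y p < x" and hi0: "x < max y p" using xs unfolding seg by (auto simp: min_def max_def split: if_splits)
    have cl: "closure (match_seg M y) = {ereal (min y p) .. ereal (max y p)}"
      unfolding seg by (rule closure_greaterThanLessThan) (use lo0 hi0 in \<open>auto simp: min_def max_def split: if_splits\<close>)
    have "\<exists>b0 r0. b0 \<in> B \<and> r0 \<in> R \<and> M b0 = Some r0 \<and> M r0 = Some b0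
       \<and> min b0 r0 = min y p \<and> max b0 r0 = max y p"
    proof (cases "y \<in> B")
      case True
      then have "p \<in> R \<and> M p = Some y" using im Some unfolding is_matching_def by force
      then show ?thesis using True Some by blast
    next
      case False
      then have yR: "y \<in> R" using y by blast
      then have "p \<in> B \<and> M p = Some y" using im Some unfolding is_matching_def by force
      then show ?thesis using yR Some min.commute max.commute by metis
    qed
    then obtain b0 r0 where b0: "b0 \<in> B" and r0: "r0 \<in> R" and mb: "M b0 = Some r0"
      and mr: "M r0 = Some b0" and mm: "min b0 r0 = min y p" and mx: "max b0 r0 = max y p"
      by blast
    have lo: "min b0 r0 < x" and hi: "x < max b0 r0" using lo0 hi0 mm mx by simp_all
    obtain q where q: "M x = Some q" "min b0 r0 \<le> q" "q \<le> max b0 r0"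
      using inner[OF rm b0 r0 mb mr x lo hi] by blast
    show ?thesis using q mm mx by (auto simp: cl partner_def min_def max_def split: if_splits)
  qed
qed

theorem lemma4p2:
  fixes P :: "'w measure" and lam mu :: real and B R :: "'w \<Rightarrow> real set"
  assumes "0 < lam" and "lam \<le> mu"
    and "poisson_matching_model P lam mu B R"
  shows "AE \<omega> in P. \<forall>M. ray_matching (B \<omega>) (R \<omega>) M \<longrightarrow> nested (B \<omega> \<union> R \<omega>) M"
  by (rule AE_I2) (auto intro: det_nested)

end
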